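(* Let $\lambda/\mu$ be a border strip with $n$ cells, let $Q_{\lambda/\mu}$ be its border strip poset, and let $\omega$ be a reversed Schur labeling. Then $$e_q^{\mathrm{inv}}(Q_{\lambda/\mu},\omega)=e_q^{\mathrm{maj}}(Q_{\lambda/\mu},\omega).$$
   Context: English notation: $[\lambda]=\{(i,j):1\le i\le\ell(\lambda),1\le j\le\lambda_i\}$, $[\lambda/\mu]=[\lambda]\setminus[\mu]$, content $c(i,j)=j-i$. A border strip is a skew shape whose diagram is edge-connected with no $2\times2$ square. Its poset $Q_{\lambda/\mu}$ on $[\lambda/\mu]$ has $(i,j)\le(i',j')$ iff $i\ge i'$ and $j\ge j'$. A reversed Schur labeling is a bijection $\omega:[\lambda/\mu]\to[n]$ whose values strictly decrease as the cells are listed in increasing order of content. Each linear extension (order-preserving bijection $g:Q_{\lambda/\mu}\to[n]$) gives the word $\sigma=\omega\circ g^{-1}=\sigma_1\cdots\sigma_n$; $\mathrm{maj}(\sigma)=\sum_{i:\sigma_i>\sigma_{i+1}}i$ and $\mathrm{inv}(\sigma)=\#\{(i,j):i<j,\ \sigma_i>\sigma_j\}$. $e_q^{\mathrm{stat}}(Q_{\lambda/\mu},\omega)=\sum_g q^{\mathrm{stat}(\omega\circ g^{-1})}$ for $\mathrm{stat}\in\{\mathrm{maj},\mathrm{inv}\}$. *)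

theory Defs
  imports "HOL-Computational_Algebra.Polynomial" "HOL-Library.FuncSet"
begin

text \<open>Partitions as lists of positive weakly decreasing parts; cells are 1-based
  (row, column) pairs in English notation.\<close>

definition is_partition :: "nat list \<Rightarrow> bool" where
  "is_partition lam \<longleftrightarrow> sorted_wrt (\<ge>) lam \<and> 0 \<notin> set lam"

definition diagram :: "nat list \<Rightarrow> (nat \<times> nat) set" where
  "diagram lam = {(i, j). 1 \<le> i \<and> i \<le> length lam \<and> 1 \<le> j \<and> j \<le> lam ! (i - 1)}"

definition contained :: "nat list \<Rightarrow> nat list \<Rightarrow> bool" where
  "contained mu lam \<longleftrightarrow> length mu \<le> length lam \<and> (\<forall>i < length mu. mu ! i \<le> lam ! i)"

definition skew_diagram :: "nat list \<Rightarrow> nat list \<Rightarrow> (nat \<times> nat) set" where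
  "skew_diagram lam mu = diagram lam - diagram mu"

definition content :: "nat \<times> nat \<Rightarrow> int" where
  "content c = int (snd c) - int (fst c)"

definition edge_adjacent :: "nat \<times> nat \<Rightarrow> nat \<times> nat \<Rightarrow> bool" where
  "edge_adjacent a b \<longleftrightarrow>
     (fst a = fst b \<and> (snd b = snd a + 1 \<or> snd a = snd b + 1)) \<or>
     (snd a = snd b \<and> (fst b = fst a + 1 \<or> fst a = fst b + 1))"

definition edge_connected :: "(nat \<times> nat) set \<Rightarrow> bool" where
  "edge_connected D \<longleftrightarrow> D \<noteq> {} \<and>
     (\<forall>a\<in>D. \<forall>b\<in>D. (\<lambda>x y. x \<in> D \<and> y \<in> D \<and> edge_adjacent x y)\<^sup>*\<^sup>* a b)"

definition no_2x2_square :: "(nat \<times> nat) set \<Rightarrow> bool" where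
  "no_2x2_square D \<longleftrightarrow>
     \<not> (\<exists>i j. (i, j) \<in> D \<and> (i, j + 1) \<in> D \<and> (i + 1, j) \<in> D \<and> (i + 1, j + 1) \<in> D)"

definition border_strip :: "nat list \<Rightarrow> nat list \<Rightarrow> bool" where
  "border_strip lam mu \<longleftrightarrow> is_partition lam \<and> is_partition mu \<and> contained mu lam \<and>
     edge_connected (skew_diagram lam mu) \<and> no_2x2_square (skew_diagram lam mu)"

definition bs_le :: "nat \<times> nat \<Rightarrow> nat \<times> nat \<Rightarrow> bool" where
  "bs_le a b \<longleftrightarrow> fst a \<ge> fst b \<and> snd a \<ge> snd b"

definition reversed_schur_labeling :: "(nat \<times> nat) set \<Rightarrow> (nat \<times> nat \<Rightarrow> nat) \<Rightarrow> bool" where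
  "reversed_schur_labeling D \<omega> \<longleftrightarrow> bij_betw \<omega> D {1..card D} \<and>
     (\<forall>a\<in>D. \<forall>b\<in>D. content a < content b \<longrightarrow> \<omega> a > \<omega> b)"

text \<open>Linear extensions: order-preserving bijections onto {1..n}, taken extensional
  so that the set is finite.\<close>
definition linear_extensions :: "(nat \<times> nat) set \<Rightarrow> ((nat \<times> nat) \<Rightarrow> nat) set" where
  "linear_extensions D = {g \<in> D \<rightarrow>\<^sub>E {1..card D}. bij_betw g D {1..card D} \<and>
     (\<forall>a\<in>D. \<forall>b\<in>D. bs_le a b \<longrightarrow> g a \<le> g b)}"

text \<open>Words sigma_1 ... sigma_n are functions on positions 1..n.\<close>
definition maj :: "nat \<Rightarrow> (nat \<Rightarrow> nat) \<Rightarrow> nat" where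
  "maj n \<sigma> = (\<Sum>i\<in>{i. 1 \<le> i \<and> i < n \<and> \<sigma> i > \<sigma> (i + 1)}. i)"

definition inv_stat :: "nat \<Rightarrow> (nat \<Rightarrow> nat) \<Rightarrow> nat" where
  "inv_stat n \<sigma> = card {(i, j). 1 \<le> i \<and> i < j \<and> j \<le> n \<and> \<sigma> i > \<sigma> j}"

definition word_of :: "(nat \<times> nat) set \<Rightarrow> (nat \<times> nat \<Rightarrow> nat) \<Rightarrow> (nat \<times> nat \<Rightarrow> nat) \<Rightarrow> nat \<Rightarrow> nat" where
  "word_of D \<omega> g = (\<lambda>i. \<omega> (inv_into D g i))"

definition eq_stat :: "(nat \<Rightarrow> (nat \<Rightarrow> nat) \<Rightarrow> nat) \<Rightarrow> (nat \<times> nat) set \<Rightarrow> (nat \<times> nat \<Rightarrow> nat) \<Rightarrow> int poly" where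
  "eq_stat stat D \<omega> = (\<Sum>g\<in>linear_extensions D. monom 1 (stat (card D) (word_of D \<omega> g)))"

end

theory Submission
  imports Defs "HOL-Library.Multiset"
begin

fun invr :: "nat list \<Rightarrow> nat" where
  "invr [] = 0"
| "invr (x # xs) = length (filter (\<lambda>y. y < x) xs) + invr xs"

definition cr :: "nat list \<Rightarrow> nat list \<Rightarrow> nat" where
  "cr xs ys = sum_list (map (\<lambda>x. length (filter (\<lambda>y. y < x) ys)) xs)"

lemma len_filter_mset: "mset xs = mset ys \<Longrightarrow> length (filter P xs) = length (filter P ys)"
  by (metis mset_filter size_mset)

lemma cr_Nil [simp]: "cr [] ys = 0" "cr xs [] = 0"
  unfolding cr_def by (simp, induction xs, auto)

lemma cr_Cons1 [simp]: "cr (x # xs) ys = length (filter (\<lambda>y. y < x) ys) + cr xs ys"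
  by (simp add: cr_def)

lemma cr_append1: "cr (xs @ zs) ys = cr xs ys + cr zs ys"
  by (induction xs) auto

lemma cr_append2: "cr xs (ys @ zs) = cr xs ys + cr xs zs"
  by (induction xs) auto

lemma cr_mset2: "mset ys = mset zs \<Longrightarrow> cr xs ys = cr xs zs"
  by (induction xs) (auto dest: len_filter_mset)

lemma invr_append: "invr (xs @ ys) = invr xs + invr ys + cr xs ys"
  by (induction xs) auto

lemma cr_single2: "cr xs [a] = length (filter (\<lambda>x. a < x) xs)"
  by (induction xs) auto

lemma invr_snoc: "invr (xs @ [a]) = invr xs + length (filter (\<lambda>x. a < x) xs)"
  by (simp add: invr_append cr_single2)

fun cyc :: "(nat \<Rightarrow> bool) \<Rightarrow> nat list \<Rightarrow> nat list \<Rightarrow> nat list" where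
  "cyc P acc [] = acc"
| "cyc P acc (x # xs) = (if P x then x # acc @ cyc P [] xs else cyc P (acc @ [x]) xs)"

lemma mset_cyc: "mset (cyc P acc xs) = mset (acc @ xs)"
  by (induction P acc xs rule: cyc.induct) auto

lemma filter_cyc:
  assumes "\<forall>x\<in>set (acc @ xs). \<forall>y\<in>set (acc @ xs). Q x \<longrightarrow> Q y \<longrightarrow> (P x \<longleftrightarrow> P y)"
    and "\<forall>x\<in>set acc. \<not> P x"
  shows "filter Q (cyc P acc xs) = filter Q (acc @ xs)"
  using assms
proof (induction xs arbitrary: acc)
  case Nil
  then show ?case by simp
next
  case (Cons x xs acc)
  have sub: "set xs \<subseteq> set (acc @ x # xs)" "set acc \<subseteq> set (acc @ x # xs)" "x \<in> set (acc @ x # xs)"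
    by auto
  show ?case
  proof (cases "P x")
    case True
    have h1: "\<forall>u\<in>set ([] @ xs). \<forall>v\<in>set ([] @ xs). Q u \<longrightarrow> Q v \<longrightarrow> (P u \<longleftrightarrow> P v)"
      using Cons(2) sub(1) by (simp only: append_Nil) blast
    have ih: "filter Q (cyc P [] xs) = filter Q xs"
      using Cons(1)[OF h1] by simp
    show ?thesis
    proof (cases "Q x")
      case qx: True
      have "\<forall>y\<in>set acc. \<not> Q y"
      proof
        fix y assume y: "y \<in> set acc"
        show "\<not> Q y"
        proof
          assume qy: "Q y"
          have "P y = P x" using Cons(2) y qy qx sub by blast
          then show False using Cons(3) y True by simp
        qed
      qed
      then have "filter Q acc = []" by (simp add: filter_empty_conv)
      then show ?thesis using qx True ih by simp
    next
      case False
      then show ?thesis using True ih by simp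
    qed
  next
    case False
    have h1: "\<forall>u\<in>set ((acc @ [x]) @ xs). \<forall>v\<in>set ((acc @ [x]) @ xs). Q u \<longrightarrow> Q v \<longrightarrow> (P u \<longleftrightarrow> P v)"
      using Cons(2) by (simp only: append_assoc append_Cons append_Nil)
    have h2: "\<forall>u\<in>set (acc @ [x]). \<not> P u" using Cons(3) False by simp
    show ?thesis using Cons(1)[OF h1 h2] False by simp
  qed
qed

lemma cyc_C1:
  assumes "\<forall>x\<in>set acc. \<not> P x" "xs = [] \<Longrightarrow> acc = []" "xs \<noteq> [] \<Longrightarrow> P (last xs)"
    and "\<And>x y. P x \<Longrightarrow> \<not> P y \<Longrightarrow> x < y"
  shows "invr (cyc P acc xs) + length (filter (\<lambda>x. \<not> P x) (acc @ xs)) = invr (acc @ xs)"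
  using assms(1-3)
proof (induction xs arbitrary: acc)
  case Nil
  then show ?case by simp
next
  case (Cons x xs acc)
  show ?case
  proof (cases "P x")
    case True
    have lx: "xs \<noteq> [] \<Longrightarrow> P (last xs)" using Cons(4) by auto
    have ih: "invr (cyc P [] xs) + length (filter (\<lambda>x. \<not> P x) xs) = invr xs"
      using Cons(1)[of "[]", OF _ _ lx] by simp
    have m: "mset (cyc P [] xs) = mset xs" by (simp add: mset_cyc)
    have "\<forall>y\<in>set acc. x < y" using Cons(2) True assms(4) by blast
    then have a1: "filter (\<lambda>y. y < x) acc = []" 
      by (auto simp: filter_empty_conv)
    have a2: "cr acc [x] = length acc" using Cons(2) True assms(4)
      by (simp add: cr_single2)
    have "invr (cyc P acc (x # xs)) = length (filter (\<lambda>y. y < x) (acc @ cyc P [] xs)) + invr acc + invr (cyc P [] xs) + cr acc (cyc P [] xs)"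
      using True by (simp add: invr_append)
    also have "\<dots> = length (filter (\<lambda>y. y < x) xs) + invr acc + invr (cyc P [] xs) + cr acc xs"
      using a1 cr_mset2[OF m, of acc] len_filter_mset[OF m, of "\<lambda>y. y < x"] by simp
    finally show ?thesis using ih True a2 Cons(2)
      by (simp add: invr_append cr_append2[of acc "[x]" xs, simplified])
  next
    case False
    have "xs \<noteq> []" using Cons(4) False by auto
    then show ?thesis using Cons(1)[of "acc @ [x]"] Cons(2,4) False by simp
  qed
qed

lemma cyc_C2:
  assumes "\<forall>x\<in>set acc. \<not> P x" "xs = [] \<Longrightarrow> acc = []" "xs \<noteq> [] \<Longrightarrow> P (last xs)"
    and "\<And>x y. P x \<Longrightarrow> \<not> P y \<Longrightarrow> y < x"
  shows "invr (cyc P acc xs) = invr (acc @ xs) + length (filter (\<lambda>x. \<not> P x) (acc @ xs))"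
  using assms(1-3)
proof (induction xs arbitrary: acc)
  case Nil
  then show ?case by simp
next
  case (Cons x xs acc)
  show ?case
  proof (cases "P x")
    case True
    have lx: "xs \<noteq> [] \<Longrightarrow> P (last xs)" using Cons(4) by auto
    have ih: "invr (cyc P [] xs) = invr xs + length (filter (\<lambda>x. \<not> P x) xs)"
      using Cons(1)[of "[]", OF _ _ lx] by simp
    have m: "mset (cyc P [] xs) = mset xs" by (simp add: mset_cyc)
    have "\<forall>y\<in>set acc. y < x" using Cons(2) True assms(4) by blast
    then have a1: "filter (\<lambda>y. y < x) acc = acc"
      by (auto simp: filter_id_conv)
    have a2: "cr acc [x] = 0" using Cons(2) True assms(4)
      by (simp add: cr_single2 filter_empty_conv) (meson not_less_iff_gr_or_eq)
    have a3: "filter (\<lambda>x. \<not> P x) acc = acc" using Cons(2) by (simp add: filter_id_conv)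
    have "invr (cyc P acc (x # xs)) = length (filter (\<lambda>y. y < x) (acc @ cyc P [] xs)) + invr acc + invr (cyc P [] xs) + cr acc (cyc P [] xs)"
      using True by (simp add: invr_append)
    also have "\<dots> = length acc + length (filter (\<lambda>y. y < x) xs) + invr acc + invr (cyc P [] xs) + cr acc xs"
      using a1 cr_mset2[OF m, of acc] len_filter_mset[OF m, of "\<lambda>y. y < x"] by simp
    finally show ?thesis using ih True a2 a3
      by (simp add: invr_append cr_append2[of acc "[x]" xs, simplified])
  next
    case False
    have "xs \<noteq> []" using Cons(4) False by auto
    then show ?thesis using Cons(1)[of "acc @ [x]"] Cons(2,4) False by simp
  qed
qed

fun unc :: "(nat \<Rightarrow> bool) \<Rightarrow> nat option \<Rightarrow> nat list \<Rightarrow> nat list" where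
  "unc P None [] = []"
| "unc P (Some b) [] = [b]"
| "unc P None (x # xs) = unc P (Some x) xs"
| "unc P (Some b) (x # xs) = (if P x then b # unc P (Some x) xs else x # unc P (Some b) xs)"

lemma unc_app: "\<forall>y\<in>set ys. \<not> P y \<Longrightarrow> unc P (Some b) (ys @ r) = ys @ unc P (Some b) r"
  by (induction ys) auto

lemma unc_cyc_Some:
  assumes "\<forall>y\<in>set acc. \<not> P y" "xs = [] \<Longrightarrow> acc = []" "xs \<noteq> [] \<Longrightarrow> P (last xs)"
  shows "unc P (Some b) (cyc P acc xs) = b # acc @ xs"
  using assms
proof (induction xs arbitrary: acc b)
  case Nil
  then show ?case by simp
next
  case (Cons x xs acc b)
  show ?case
  proof (cases "P x")
    case True
    have "unc P (Some x) (cyc P [] xs) = x # xs"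
      using Cons(1)[of "[]"] Cons(4) by (cases xs) auto
    then show ?thesis using True Cons(2) by (simp add: unc_app)
  next
    case False
    then show ?thesis using Cons by (cases xs) auto
  qed
qed

lemma unc_cyc_None:
  assumes "\<forall>y\<in>set acc. \<not> P y" "xs \<noteq> []" "P (last xs)"
  shows "unc P None (cyc P acc xs) = acc @ xs"
  using assms
proof (induction xs arbitrary: acc)
  case Nil
  then show ?case by simp
next
  case (Cons x xs acc)
  show ?case
  proof (cases "P x")
    case True
    have "unc P (Some x) (cyc P [] xs) = x # xs"
      using unc_cyc_Some[of "[]" P xs x] Cons(4) by (cases xs) auto
    then show ?thesis using True Cons(2) by (simp add: unc_app)
  next
    case False
    then show ?thesis using Cons by (cases xs) auto
  qed
qed

lemma cyc_hd:
  assumes "xs \<noteq> []" "P (last xs)"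
  shows "cyc P acc xs \<noteq> [] \<and> P (hd (cyc P acc xs))"
  using assms
proof (induction xs arbitrary: acc)
  case Nil
  then show ?case by simp
next
  case (Cons x xs acc)
  then show ?case by (cases xs) auto
qed

definition dlt :: "nat \<Rightarrow> nat list \<Rightarrow> nat list" where
  "dlt a g = (if last g \<le> a then cyc (\<lambda>x. x \<le> a) [] g else cyc (\<lambda>x. a < x) [] g)"

definition fstep :: "nat list \<Rightarrow> nat \<Rightarrow> nat list" where
  "fstep g a = dlt a g @ [a]"

definition foata :: "nat list \<Rightarrow> nat list" where
  "foata xs = foldl fstep [] xs"

lemma foata_Nil [simp]: "foata [] = []"
  by (simp add: foata_def)

lemma foata_snoc: "foata (xs @ [a]) = dlt a (foata xs) @ [a]"
  by (simp add: foata_def fstep_def)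

lemma mset_dlt: "mset (dlt a g) = mset g"
  by (simp add: dlt_def mset_cyc)

lemma mset_foata: "mset (foata xs) = mset xs"
  by (induction xs rule: rev_induct) (auto simp: foata_snoc mset_dlt)

lemma length_foata: "length (foata xs) = length xs"
  by (metis mset_foata size_mset)

lemma dlt_inj:
  assumes "dlt a g = dlt a h"
  shows "g = h"
proof -
  have m: "mset g = mset h" using assms mset_dlt by metis
  show ?thesis
  proof (cases "g = []")
    case True
    then show ?thesis using m by simp
  next
    case False
    then have hne: "h \<noteq> []" using m by auto
    show ?thesis
    proof (cases "last g \<le> a")
      case True
      then have hd1: "hd (dlt a g) \<le> a" using cyc_hd[of g "\<lambda>x. x \<le> a" "[]"] False
        by (simp add: dlt_def)
      have "last h \<le> a"
      proof (rule ccontr)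
        assume "\<not> last h \<le> a"
        then have "a < hd (dlt a h)" using cyc_hd[of h "\<lambda>x. a < x" "[]"] hne
          by (simp add: dlt_def)
        then show False using hd1 assms by simp
      qed
      then have "cyc (\<lambda>x. x \<le> a) [] g = cyc (\<lambda>x. x \<le> a) [] h"
        using assms True by (simp add: dlt_def)
      moreover have "unc (\<lambda>x. x \<le> a) None (cyc (\<lambda>x. x \<le> a) [] g) = g"
        using unc_cyc_None[of "[]" "\<lambda>x. x \<le> a" g] False True by simp
      moreover have "unc (\<lambda>x. x \<le> a) None (cyc (\<lambda>x. x \<le> a) [] h) = h"
        using unc_cyc_None[of "[]" "\<lambda>x. x \<le> a" h] hne \<open>last h \<le> a\<close> by simp
      ultimately show ?thesis by metis
    next
      case nT: False
      then have hd1: "a < hd (dlt a g)" using cyc_hd[of g "\<lambda>x. a < x" "[]"] False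
        by (simp add: dlt_def)
      have "\<not> last h \<le> a"
      proof
        assume "last h \<le> a"
        then have "hd (dlt a h) \<le> a" using cyc_hd[of h "\<lambda>x. x \<le> a" "[]"] hne
          by (simp add: dlt_def)
        then show False using hd1 assms by simp
      qed
      then have "cyc (\<lambda>x. a < x) [] g = cyc (\<lambda>x. a < x) [] h"
        using assms nT by (simp add: dlt_def)
      moreover have "unc (\<lambda>x. a < x) None (cyc (\<lambda>x. a < x) [] g) = g"
        using unc_cyc_None[of "[]" "\<lambda>x. a < x" g] False nT by simp
      moreover have "unc (\<lambda>x. a < x) None (cyc (\<lambda>x. a < x) [] h) = h"
        using unc_cyc_None[of "[]" "\<lambda>x. a < x" h] hne \<open>\<not> last h \<le> a\<close> by simp
      ultimately show ?thesis by metis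
    qed
  qed
qed

lemma foata_inj: "foata xs = foata ys \<Longrightarrow> xs = ys"
proof (induction xs arbitrary: ys rule: rev_induct)
  case Nil
  then show ?case using length_foata[of ys] by simp
next
  case (snoc a xs ys)
  have "ys \<noteq> []" using snoc(2) length_foata[of ys] length_foata[of "xs @ [a]"] by auto
  then obtain ys' b where ys: "ys = ys' @ [b]" by (metis rev_exhaust)
  have "dlt a (foata xs) @ [a] = dlt b (foata ys') @ [b]" by (metis snoc(2) ys foata_snoc)
  then have ab: "a = b" by simp
  then have "dlt a (foata xs) = dlt a (foata ys')"
    using \<open>dlt a (foata xs) @ [a] = dlt b (foata ys') @ [b]\<close> by simp
  then have "foata xs = foata ys'" by (rule dlt_inj)
  then show ?case using snoc(1) ab ys by simp
qed

definition majl :: "nat list \<Rightarrow> nat" where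
  "majl xs = (\<Sum>i\<in>{i. 1 \<le> i \<and> i < length xs \<and> xs ! (i - 1) > xs ! i}. i)"

lemma majl_snoc: "majl (xs @ [a]) = majl xs + (if xs \<noteq> [] \<and> a < last xs then length xs else 0)"
proof -
  let ?S = "{i. 1 \<le> i \<and> i < length xs \<and> xs ! (i - 1) > xs ! i}"
  let ?T = "{i. i = length xs \<and> xs \<noteq> [] \<and> a < last xs}"
  have eq: "{i. 1 \<le> i \<and> i < length (xs @ [a]) \<and> (xs @ [a]) ! (i - 1) > (xs @ [a]) ! i} = ?S \<union> ?T"
  proof (rule set_eqI)
    fix i
    consider "i < length xs" | "i = length xs" | "i > length xs" by linarith
    then show "i \<in> {i. 1 \<le> i \<and> i < length (xs @ [a]) \<and> (xs @ [a]) ! (i - 1) > (xs @ [a]) ! i} \<longleftrightarrow> i \<in> ?S \<union> ?T"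
    proof cases
      case 1
      moreover have "i - 1 < length xs" using 1 by simp
      ultimately show ?thesis by (simp add: nth_append)
    next
      case 2
      show ?thesis
      proof (cases "xs = []")
        case True
        then show ?thesis using 2 by simp
      next
        case False
        then have "1 \<le> length xs" by (cases xs) auto
        then show ?thesis using 2 False by (simp add: nth_append last_conv_nth)
      qed
    next
      case 3
      then show ?thesis by simp
    qed
  qed
  have "finite ?S" by (rule finite_subset[of _ "{..<length xs}"]) auto
  moreover have "finite ?T" by (rule finite_subset[of _ "{length xs}"]) auto
  moreover have "?S \<inter> ?T = {}" by auto
  ultimately have "majl (xs @ [a]) = majl xs + sum id ?T"
    unfolding majl_def eq by (simp add: sum.union_disjoint)
  also have "sum id ?T = (if xs \<noteq> [] \<and> a < last xs then length xs else 0)"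
    by (cases "xs \<noteq> [] \<and> a < last xs") auto
  finally show ?thesis .
qed

lemma invr_dlt: "invr (dlt a g @ [a]) = invr g + (if g \<noteq> [] \<and> a < last g then length g else 0)"
proof (cases "g = []")
  case True
  then show ?thesis by (simp add: dlt_def)
next
  case False
  show ?thesis
  proof (cases "last g \<le> a")
    case True
    have "invr (cyc (\<lambda>x. x \<le> a) [] g) + length (filter (\<lambda>x. \<not> x \<le> a) g) = invr g"
      using cyc_C1[of "[]" "\<lambda>x. x \<le> a" g] False True by auto
    moreover have "length (filter (\<lambda>x. a < x) (cyc (\<lambda>x. x \<le> a) [] g)) = length (filter (\<lambda>x. \<not> x \<le> a) g)"
      using len_filter_mset[OF mset_cyc[of "\<lambda>x. x \<le> a" "[]" g]] by (simp add: not_le)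
    ultimately show ?thesis using True by (simp add: dlt_def invr_snoc)
  next
    case nT: False
    have "invr (cyc (\<lambda>x. a < x) [] g) = invr g + length (filter (\<lambda>x. \<not> a < x) g)"
      using cyc_C2[of "[]" "\<lambda>x. a < x" g] False nT by auto
    moreover have "length (filter (\<lambda>x. a < x) (cyc (\<lambda>x. a < x) [] g)) = length (filter (\<lambda>x. a < x) g)"
      using len_filter_mset[OF mset_cyc[of "\<lambda>x. a < x" "[]" g]] by simp
    moreover have "length (filter (\<lambda>x. \<not> a < x) g) + length (filter (\<lambda>x. a < x) g) = length g"
      by (metis add.commute sum_length_filter_compl)
    ultimately show ?thesis using nT False by (simp add: dlt_def invr_snoc)
  qed
qed

lemma last_foata: "xs \<noteq> [] \<Longrightarrow> last (foata xs) = last xs"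
  by (induction xs rule: rev_induct) (auto simp: foata_snoc)

lemma invr_foata: "invr (foata xs) = majl xs"
proof (induction xs rule: rev_induct)
  case Nil
  then show ?case by (simp add: majl_def)
next
  case (snoc a xs)
  have ne: "foata xs \<noteq> [] \<longleftrightarrow> xs \<noteq> []" using length_foata[of xs] by auto
  show ?case
  proof (cases "xs = []")
    case True
    have "foata [a] = [a]" by (simp add: foata_def fstep_def dlt_def)
    then show ?thesis using True by (simp add: majl_def)
  next
    case False
    then show ?thesis using snoc ne last_foata[of xs] length_foata[of xs]
      by (simp add: foata_snoc invr_dlt majl_snoc)
  qed
qed

lemma filter_foata:
  assumes "distinct xs"
  shows "filter (\<lambda>x. x = u \<or> x = Suc u) (foata xs) = filter (\<lambda>x. x = u \<or> x = Suc u) xs"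
  using assms
proof (induction xs rule: rev_induct)
  case Nil
  then show ?case by simp
next
  case (snoc a xs)
  let ?Q = "\<lambda>x. x = u \<or> x = Suc u"
  have na: "a \<notin> set (foata xs)" using snoc(2) mset_eq_setD[OF mset_foata[of xs]] by simp
  have c1: "\<forall>x\<in>set ([] @ foata xs). \<forall>y\<in>set ([] @ foata xs). ?Q x \<longrightarrow> ?Q y \<longrightarrow> (x \<le> a \<longleftrightarrow> y \<le> a)"
  proof (intro ballI impI)
    fix x y assume "x \<in> set ([] @ foata xs)" "y \<in> set ([] @ foata xs)" "?Q x" "?Q y"
    moreover have "x \<noteq> a" "y \<noteq> a" using na calculation(1,2) by auto
    ultimately show "x \<le> a \<longleftrightarrow> y \<le> a" by (elim disjE) auto
  qed
  have c2: "\<forall>x\<in>set ([] @ foata xs). \<forall>y\<in>set ([] @ foata xs). ?Q x \<longrightarrow> ?Q y \<longrightarrow> (a < x \<longleftrightarrow> a < y)"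
  proof (intro ballI impI)
    fix x y assume "x \<in> set ([] @ foata xs)" "y \<in> set ([] @ foata xs)" "?Q x" "?Q y"
    moreover have "x \<noteq> a" "y \<noteq> a" using na calculation(1,2) by auto
    ultimately show "a < x \<longleftrightarrow> a < y" by (elim disjE) auto
  qed
  have "filter ?Q (dlt a (foata xs)) = filter ?Q (foata xs)"
  proof (cases "last (foata xs) \<le> a")
    case True
    then have "dlt a (foata xs) = cyc (\<lambda>x. x \<le> a) [] (foata xs)" by (simp add: dlt_def)
    moreover have "filter ?Q (cyc (\<lambda>x. x \<le> a) [] (foata xs)) = filter ?Q ([] @ foata xs)"
      by (rule filter_cyc[OF c1]) simp
    ultimately show ?thesis by simp
  next
    case False
    then have "dlt a (foata xs) = cyc (\<lambda>x. a < x) [] (foata xs)" by (simp add: dlt_def)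
    moreover have "filter ?Q (cyc (\<lambda>x. a < x) [] (foata xs)) = filter ?Q ([] @ foata xs)"
      by (rule filter_cyc[OF c2]) simp
    ultimately show ?thesis by simp
  qed
  then show ?case using snoc by (simp add: foata_snoc)
qed

definition Eset :: "nat \<Rightarrow> (nat \<Rightarrow> bool) \<Rightarrow> nat list set" where
  "Eset n dir = {xs. distinct xs \<and> set xs = {1..n} \<and>
     (\<forall>m. 1 \<le> m \<longrightarrow> m < n \<longrightarrow> (filter (\<lambda>x. x = m \<or> x = Suc m) xs = [Suc m, m] \<longleftrightarrow> dir m))}"

lemma finite_Eset: "finite (Eset n dir)"
proof (rule finite_subset)
  show "Eset n dir \<subseteq> {xs. set xs \<subseteq> {1..n} \<and> length xs = n}"
    unfolding Eset_def by (auto dest: distinct_card)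
  show "finite {xs. set xs \<subseteq> {1..n} \<and> length xs = n}"
    by (rule finite_lists_length_eq) simp
qed

lemma foata_Eset:
  assumes "xs \<in> Eset n dir"
  shows "foata xs \<in> Eset n dir"
proof -
  have d: "distinct xs" and s: "set xs = {1..n}"
    and p: "\<forall>m. 1 \<le> m \<longrightarrow> m < n \<longrightarrow> (filter (\<lambda>x. x = m \<or> x = Suc m) xs = [Suc m, m] \<longleftrightarrow> dir m)"
    using assms by (simp_all add: Eset_def)
  have m: "mset (foata xs) = mset xs" by (rule mset_foata)
  have "distinct (foata xs)" using d mset_eq_imp_distinct_iff[OF m] by simp
  moreover have "set (foata xs) = {1..n}" using s mset_eq_setD[OF m] by simp
  moreover have "\<forall>m. 1 \<le> m \<longrightarrow> m < n \<longrightarrow> (filter (\<lambda>x. x = m \<or> x = Suc m) (foata xs) = [Suc m, m] \<longleftrightarrow> dir m)"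
    using p filter_foata[OF d] by simp
  ultimately show ?thesis by (simp add: Eset_def)
qed

theorem Eset_equidist:
  "(\<Sum>xs\<in>Eset n dir. f (invr xs)) = (\<Sum>xs\<in>Eset n dir. f (majl xs))"
proof -
  let ?E = "Eset n dir"
  have inj: "inj_on foata ?E" by (meson foata_inj inj_onI)
  have im: "foata ` ?E = ?E"
    by (rule endo_inj_surj[OF finite_Eset _ inj]) (auto intro: foata_Eset)
  have "(\<Sum>xs\<in>?E. f (majl xs)) = (\<Sum>xs\<in>?E. f (invr (foata xs)))"
    by (simp add: invr_foata)
  also have "\<dots> = (\<Sum>xs\<in>foata ` ?E. f (invr xs))"
    by (simp add: sum.reindex[OF inj])
  finally show ?thesis using im by simp
qed

lemma invr_alt: "invr xs = card {(i, j). i < j \<and> j < length xs \<and> xs ! i > xs ! j}"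
proof (induction xs)
  case Nil
  then show ?case by simp
next
  case (Cons x xs)
  let ?A = "{(i, j). i < j \<and> j < length xs \<and> xs ! i > xs ! j}"
  let ?B = "{(i, j). i < j \<and> j < length (x # xs) \<and> (x # xs) ! i > (x # xs) ! j}"
  have eq: "?B = (\<lambda>j. (0, Suc j)) ` {j. j < length xs \<and> xs ! j < x} \<union> (\<lambda>(i, j). (Suc i, Suc j)) ` ?A"
  proof (rule set_eqI, clarify)
    fix i j
    show "((i, j) \<in> ?B) = ((i, j) \<in> (\<lambda>j. (0, Suc j)) ` {j. j < length xs \<and> xs ! j < x} \<union> (\<lambda>(i, j). (Suc i, Suc j)) ` ?A)"
      by (cases i; cases j) (auto simp: image_iff)
  qed
  have fA: "finite ?A" by (rule finite_subset[of _ "{..<length xs} \<times> {..<length xs}"]) auto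
  have "card ?B = card {j. j < length xs \<and> xs ! j < x} + card ?A"
    unfolding eq
    by (subst card_Un_disjoint) (auto simp: card_image inj_on_def fA intro!: card_image)
  then show ?case using Cons by (simp add: length_filter_conv_card)
qed

lemma map_shift: "length (map \<sigma> [1..<n+1]) = n" "k < n \<Longrightarrow> map \<sigma> [1..<n+1] ! k = \<sigma> (Suc k)"
  by (simp_all del: upt_Suc)

lemma inv_stat_bridge: "inv_stat n \<sigma> = invr (map \<sigma> [1..<n+1])"
proof -
  let ?xs = "map \<sigma> [1..<n+1]"
  let ?A = "{(i, j). i < j \<and> j < length ?xs \<and> ?xs ! i > ?xs ! j}"
  let ?B = "{(i, j). 1 \<le> i \<and> i < j \<and> j \<le> n \<and> \<sigma> i > \<sigma> j}"
  have "?A = (\<lambda>(i, j). (i - 1, j - 1)) ` ?B"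
  proof (rule set_eqI, clarify)
    fix i j
    show "((i, j) \<in> ?A) = ((i, j) \<in> (\<lambda>(i, j). (i - 1, j - 1)) ` ?B)"
    proof
      assume "(i, j) \<in> ?A"
      then have h: "i < j" "j < n" "\<sigma> (Suc i) > \<sigma> (Suc j)" using map_shift(1)[of \<sigma> n] map_shift(2)[of _ n \<sigma>] by auto
      then have "(Suc i, Suc j) \<in> ?B" by auto
      then show "(i, j) \<in> (\<lambda>(i, j). (i - 1, j - 1)) ` ?B" by force
    next
      assume "(i, j) \<in> (\<lambda>(i, j). (i - 1, j - 1)) ` ?B"
      then obtain a b where ab: "(a, b) \<in> ?B" "i = a - 1" "j = b - 1" by auto
      then have "a = Suc i" "b = Suc j" by auto
      then show "(i, j) \<in> ?A" using ab map_shift(1)[of \<sigma> n] map_shift(2)[of _ n \<sigma>] by auto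
    qed
  qed
  moreover have "inj_on (\<lambda>(i, j). (i - 1, j - 1)) ?B"
    by (auto simp: inj_on_def)
  ultimately show ?thesis unfolding inv_stat_def invr_alt by (simp add: card_image)
qed

lemma maj_bridge: "maj n \<sigma> = majl (map \<sigma> [1..<n+1])"
proof -
  have "{i. 1 \<le> i \<and> i < length (map \<sigma> [1..<n+1]) \<and> map \<sigma> [1..<n+1] ! (i - 1) > map \<sigma> [1..<n+1] ! i}
      = {i. 1 \<le> i \<and> i < n \<and> \<sigma> i > \<sigma> (i + 1)}"
  proof (rule Collect_cong)
    fix i
    show "(1 \<le> i \<and> i < length (map \<sigma> [1..<n+1]) \<and> map \<sigma> [1..<n+1] ! (i - 1) > map \<sigma> [1..<n+1] ! i)
        = (1 \<le> i \<and> i < n \<and> \<sigma> i > \<sigma> (i + 1))"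
    proof (cases "1 \<le> i \<and> i < n")
      case True
      then have "map \<sigma> [1..<n+1] ! (i - 1) = \<sigma> i" "map \<sigma> [1..<n+1] ! i = \<sigma> (i + 1)"
        using map_shift(2)[of "i - 1" n \<sigma>] map_shift(2)[of i n \<sigma>] by auto
      then show ?thesis using True map_shift(1)[of \<sigma> n] by auto
    next
      case False
      then show ?thesis using map_shift(1)[of \<sigma> n] by auto
    qed
  qed
  then show ?thesis unfolding maj_def majl_def by simp
qed



lemma diagram_ideal:
  assumes "is_partition lam" "(i, j) \<in> diagram lam" "1 \<le> i'" "i' \<le> i" "1 \<le> j'" "j' \<le> j"
  shows "(i', j') \<in> diagram lam"
proof -
  have "lam ! (i - 1) \<le> lam ! (i' - 1)"
  proof (cases "i' < i")
    case True
    then show ?thesis using assms sorted_wrt_nth_less[of "(\<ge>)" lam "i' - 1" "i - 1"]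
      by (auto simp: is_partition_def diagram_def)
  next
    case False
    then show ?thesis using assms by simp
  qed
  then show ?thesis using assms by (auto simp: diagram_def)
qed

lemma adj_content:
  assumes "edge_adjacent x y" "content y = content x + 1"
  shows "(fst y = fst x \<and> snd y = snd x + 1) \<or> (fst x = fst y + 1 \<and> snd y = snd x)"
  using assms by (auto simp: edge_adjacent_def content_def)

lemma adj_content2:
  assumes "edge_adjacent x y"
  shows "content y = content x + 1 \<or> content y = content x - 1"
  using assms by (auto simp: edge_adjacent_def content_def)

lemma ivt_path:
  assumes "(\<lambda>x y. x \<in> D \<and> y \<in> D \<and> edge_adjacent x y)\<^sup>*\<^sup>* a b"
  shows "content a \<le> k \<Longrightarrow> k < content b \<Longrightarrow> \<exists>x y. x \<in> D \<and> y \<in> D \<and> edge_adjacent x y \<and> content x = k \<and> content y = k + 1"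
  using assms
proof (induction rule: rtranclp_induct)
  case base
  then show ?case by simp
next
  case (step y z)
  show ?case
  proof (cases "k < content y")
    case True
    then show ?thesis using step.IH step.prems(1) by simp
  next
    case False
    then have "content z = content y + 1" using adj_content2[of y z] step by auto
    then show ?thesis using step False by (intro exI[of _ y] exI[of _ z]) auto
  qed
qed

lemma chain_lt:
  assumes "\<And>m. p \<le> m \<Longrightarrow> m < r \<Longrightarrow> f m < (f (Suc m) :: nat)" "p < r"
  shows "f p < f r"
  using assms
proof (induction r)
  case 0
  then show ?case by simp
next
  case (Suc r)
  show ?case
  proof (cases "p = r")
    case True
    then show ?thesis using Suc by simp
  next
    case False
    then have "f p < f r" using Suc by simp
    also have "f r < f (Suc r)" using Suc by simp
    finally show ?thesis .
  qed
qed

lemma chain_gt: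
  assumes "\<And>m. p \<le> m \<Longrightarrow> m < r \<Longrightarrow> f (Suc m) < (f m :: nat)" "p < r"
  shows "f r < f p"
  using assms
proof (induction r)
  case 0
  then show ?case by simp
next
  case (Suc r)
  show ?case
  proof (cases "p = r")
    case True
    then show ?thesis using Suc by simp
  next
    case False
    then have "f r < f p" using Suc by simp
    moreover have "f (Suc r) < f r" using Suc by simp
    ultimately show ?thesis by simp
  qed
qed

lemma filter_single: "distinct ys \<Longrightarrow> a \<in> set ys \<Longrightarrow> filter (\<lambda>x. x = a) ys = [a]"
proof (induction ys)
  case Nil
  then show ?case by simp
next
  case (Cons z zs)
  show ?case
  proof (cases "z = a")
    case True
    then have "filter (\<lambda>x. x = a) zs = []" using Cons(2) by (auto simp: filter_empty_conv)
    then show ?thesis using True by simp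
  next
    case False
    then show ?thesis using Cons by simp
  qed
qed

lemma filter_two: "distinct xs \<Longrightarrow> i < j \<Longrightarrow> j < length xs \<Longrightarrow>
  filter (\<lambda>x. x = xs ! i \<or> x = xs ! j) xs = [xs ! i, xs ! j]"
proof (induction xs arbitrary: i j)
  case Nil
  then show ?case by simp
next
  case (Cons y ys i j)
  obtain j' where j: "j = Suc j'" using Cons(3) by (cases j) auto
  have jl: "j' < length ys" using Cons(4) j by simp
  show ?case
  proof (cases i)
    case 0
    have ny: "y \<notin> set ys" using Cons(2) by simp
    have "filter (\<lambda>x. x = y \<or> x = ys ! j') ys = filter (\<lambda>x. x = ys ! j') ys"
      using ny by (intro filter_cong) auto
    also have "\<dots> = [ys ! j']" using filter_single[of ys "ys ! j'"] Cons(2) jl by simp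
    finally show ?thesis using 0 j by simp
  next
    case (Suc i')
    have "y \<noteq> ys ! i'" "y \<noteq> ys ! j'" using Cons(2) Suc j Cons(3) jl by (auto simp: nth_mem)
    then show ?thesis using Cons(1)[of i' j'] Cons(2,3) Suc j jl by simp
  qed
qed

lemma filter_two': "distinct xs \<Longrightarrow> i < length xs \<Longrightarrow> j < length xs \<Longrightarrow> i \<noteq> j \<Longrightarrow>
  filter (\<lambda>x. x = xs ! i \<or> x = xs ! j) xs = (if i < j then [xs ! i, xs ! j] else [xs ! j, xs ! i])"
proof (cases "i < j")
  case True
  assume "distinct xs" "j < length xs"
  then show ?thesis using filter_two True by simp
next
  case False
  assume a: "distinct xs" "i < length xs" "i \<noteq> j"
  then have "j < i" using False by simp
  then have "filter (\<lambda>x. x = xs ! j \<or> x = xs ! i) xs = [xs ! j, xs ! i]" using filter_two a by simp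
  moreover have "(\<lambda>x. x = xs ! i \<or> x = xs ! j) = (\<lambda>x. x = xs ! j \<or> x = xs ! i)" by auto
  ultimately show ?thesis using False by simp
qed

lemma bij_Suc: "bij_betw Suc {..<n} {1..n}"
  unfolding bij_betw_def
proof
  show "inj_on Suc {..<n}" by simp
  show "Suc ` {..<n} = {1..n}"
  proof
    show "Suc ` {..<n} \<subseteq> {1..n}" by auto
    show "{1..n} \<subseteq> Suc ` {..<n}"
    proof
      fix x assume "x \<in> {1..n}"
      then have "x = Suc (x - 1)" "x - 1 < n" by auto
      then show "x \<in> Suc ` {..<n}" by blast
    qed
  qed
qed

context
  fixes lam mu :: "nat list" and \<omega> :: "nat \<times> nat \<Rightarrow> nat"
  assumes bs: "border_strip lam mu" and rs: "reversed_schur_labeling (skew_diagram lam mu) \<omega>"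
begin

abbreviation "DD \<equiv> skew_diagram lam mu"
abbreviation "nn \<equiv> card DD"
abbreviation "cell v \<equiv> inv_into DD \<omega> v"

lemma bij_om: "bij_betw \<omega> DD {1..nn}"
  using rs by (simp add: reversed_schur_labeling_def)

lemma DD_ne: "DD \<noteq> {}"
  using bs by (simp add: border_strip_def edge_connected_def)

lemma fin_DD: "finite DD"
proof (rule ccontr)
  assume "infinite DD"
  then have "card DD = 0" by simp
  then show False using bij_om DD_ne by (simp add: bij_betw_def)
qed

lemma cell_in: "v \<in> {1..nn} \<Longrightarrow> cell v \<in> DD"
  using bij_om by (metis bij_betw_def inv_into_into)

lemma om_cell: "v \<in> {1..nn} \<Longrightarrow> \<omega> (cell v) = v"
  using bij_om by (metis bij_betw_def f_inv_into_f)

lemma cell_om: "c \<in> DD \<Longrightarrow> cell (\<omega> c) = c"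
  using bij_om by (metis bij_betw_def inv_into_f_f)

lemma om_range: "c \<in> DD \<Longrightarrow> \<omega> c \<in> {1..nn}"
  using bij_om by (metis bij_betw_def imageI)

lemma content_inj:
  assumes "a \<in> DD" "b \<in> DD" "content a = content b"
  shows "a = b"
proof (rule ccontr)
  assume ne: "a \<noteq> b"
  have part: "is_partition lam" "is_partition mu" and no2: "no_2x2_square DD"
    using bs by (auto simp: border_strip_def)
  have key: "\<And>i j d. (i, j) \<in> DD \<Longrightarrow> (i + d, j + d) \<in> DD \<Longrightarrow> d \<ge> 1 \<Longrightarrow> False"
  proof -
    fix i j d :: nat
    assume a: "(i, j) \<in> DD" and b: "(i + d, j + d) \<in> DD" and d: "d \<ge> 1"
    have ij: "1 \<le> i" "1 \<le> j" using a by (auto simp: skew_diagram_def diagram_def)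
    have inl: "\<And>i' j'. i \<le> i' \<Longrightarrow> i' \<le> i + d \<Longrightarrow> j \<le> j' \<Longrightarrow> j' \<le> j + d \<Longrightarrow> (i', j') \<in> diagram lam"
      using diagram_ideal[OF part(1)] b ij by (simp add: skew_diagram_def) (meson le_trans)
    have notmu: "\<And>i' j'. i \<le> i' \<Longrightarrow> j \<le> j' \<Longrightarrow> (i', j') \<notin> diagram mu"
      using diagram_ideal[OF part(2), of _ _ i j] a ij by (auto simp: skew_diagram_def)
    have "(i, j + 1) \<in> DD" "(i + 1, j) \<in> DD" "(i + 1, j + 1) \<in> DD"
      using inl notmu d a by (auto simp: skew_diagram_def)
    then show False using no2 a by (auto simp: no_2x2_square_def)
  qed
  obtain i j i' j' where a: "a = (i, j)" and b: "b = (i', j')" by (cases a, cases b)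
  have "int j - int i = int j' - int i'" using assms(3) a b by (simp add: content_def)
  then consider "i < i'" "j' = j + (i' - i)" | "i' < i" "j = j' + (i - i')" | "i = i'" "j = j'"
    by linarith
  then show False
  proof cases
    case 1
    define d where "d = i' - i"
    have e: "i' = i + d" "j' = j + d" "d \<ge> 1" using 1 by (simp_all add: d_def)
    have "(i + d, j + d) \<in> DD" using assms(2) b e by simp
    then show False using key[of i j d] assms(1) a e by simp
  next
    case 2
    define d where "d = i - i'"
    have e: "i = i' + d" "j = j' + d" "d \<ge> 1" using 2 by (simp_all add: d_def)
    have "(i' + d, j' + d) \<in> DD" using assms(1) a e by simp
    then show False using key[of i' j' d] assms(2) b e by simp
  next
    case 3
    then show False using ne a b by simp
  qed
qed

lemma consec_adj:
  assumes "1 \<le> m" "m < nn"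
  shows "(fst (cell m) = fst (cell (Suc m)) \<and> snd (cell m) = snd (cell (Suc m)) + 1) \<or>
         (fst (cell (Suc m)) = fst (cell m) + 1 \<and> snd (cell m) = snd (cell (Suc m)))"
proof -
  let ?A = "cell (Suc m)" and ?B = "cell m"
  have A: "?A \<in> DD" "\<omega> ?A = Suc m" using assms cell_in om_cell by auto
  have B: "?B \<in> DD" "\<omega> ?B = m" using assms cell_in om_cell by auto
  have lab: "\<And>a b. a \<in> DD \<Longrightarrow> b \<in> DD \<Longrightarrow> content a < content b \<Longrightarrow> \<omega> a > \<omega> b"
    using rs by (auto simp: reversed_schur_labeling_def)
  have "?A \<noteq> ?B" using A(2) B(2) by auto
  then have "content ?A \<noteq> content ?B" using content_inj A(1) B(1) by blast
  moreover have "\<not> content ?B < content ?A" using lab[of ?B ?A] A B by auto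
  ultimately have lt: "content ?A < content ?B" by simp
  have conn: "(\<lambda>x y. x \<in> DD \<and> y \<in> DD \<and> edge_adjacent x y)\<^sup>*\<^sup>* ?A ?B"
    using bs A B by (auto simp: border_strip_def edge_connected_def)
  obtain x y where xy: "x \<in> DD" "y \<in> DD" "edge_adjacent x y" "content x = content ?A" "content y = content ?A + 1"
    using ivt_path[OF conn, of "content ?A"] lt by auto
  have x: "x = ?A" using content_inj xy A by blast
  have "content y = content ?B"
  proof (rule ccontr)
    assume "content y \<noteq> content ?B"
    then have "content y < content ?B" using xy lt by simp
    then have "\<omega> y > m" using lab[of y ?B] xy B by simp
    moreover have "\<omega> y < Suc m" using lab[of ?A y] xy A by simp
    ultimately show False by simp
  qed
  then have "y = ?B" using content_inj xy B by blast
  then show ?thesis using adj_content[of x y] xy x by auto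
qed

lemma card_step:
  assumes "p \<le> r"
  shows "card {m \<in> {p..<Suc r}. Q m} = card {m \<in> {p..<r}. Q m} + (if Q r then 1 else 0)"
proof -
  have e: "{m \<in> {p..<Suc r}. Q m} = (if Q r then insert r {m \<in> {p..<r}. Q m} else {m \<in> {p..<r}. Q m})"
    using assms by (auto simp: less_Suc_eq)
  show ?thesis unfolding e by simp
qed

definition dirr :: "nat \<Rightarrow> bool" where
  "dirr m = (fst (cell m) < fst (cell (Suc m)))"

lemma mono_cells:
  assumes "1 \<le> p" "p \<le> r" "r \<le> nn"
  shows "fst (cell p) + card {m \<in> {p..<r}. dirr m} = fst (cell r) \<and>
         snd (cell p) = snd (cell r) + card {m \<in> {p..<r}. \<not> dirr m}"
  using assms(2,3)
proof (induction r)
  case 0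
  then show ?case by simp
next
  case (Suc r)
  show ?case
  proof (cases "p = Suc r")
    case True
    then show ?thesis by simp
  next
    case False
    then have pr: "p \<le> r" using Suc by simp
    have ih: "fst (cell p) + card {m \<in> {p..<r}. dirr m} = fst (cell r) \<and>
         snd (cell p) = snd (cell r) + card {m \<in> {p..<r}. \<not> dirr m}"
      using Suc pr by simp
    have "1 \<le> r" "r < nn" using pr assms Suc by auto
    then have adj: "(fst (cell r) = fst (cell (Suc r)) \<and> snd (cell r) = snd (cell (Suc r)) + 1) \<or>
         (fst (cell (Suc r)) = fst (cell r) + 1 \<and> snd (cell r) = snd (cell (Suc r)))"
      by (rule consec_adj)
    have c1: "card {m \<in> {p..<Suc r}. dirr m} = card {m \<in> {p..<r}. dirr m} + (if dirr r then 1 else 0)"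
      by (rule card_step[OF pr])
    have c2: "card {m \<in> {p..<Suc r}. \<not> dirr m} = card {m \<in> {p..<r}. \<not> dirr m} + (if dirr r then 0 else 1)"
      using card_step[OF pr, of "\<lambda>m. \<not> dirr m"] by simp
    show ?thesis
    proof (cases "dirr r")
      case True
      then have "fst (cell (Suc r)) = fst (cell r) + 1 \<and> snd (cell r) = snd (cell (Suc r))"
        using adj unfolding dirr_def by auto
      then show ?thesis using ih c1 c2 True by simp
    next
      case False
      then have "fst (cell r) = fst (cell (Suc r)) \<and> snd (cell r) = snd (cell (Suc r)) + 1"
        using adj unfolding dirr_def by auto
      then show ?thesis using ih c1 c2 False by simp
    qed
  qed
qed


lemma fin_LE_facts:
  assumes "g \<in> linear_extensions DD"
  shows "bij_betw g DD {1..nn}" "\<And>a b. a \<in> DD \<Longrightarrow> b \<in> DD \<Longrightarrow> bs_le a b \<Longrightarrow> g a \<le> g b"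
    "\<And>c. c \<notin> DD \<Longrightarrow> g c = undefined"
  using assms by (auto simp: linear_extensions_def PiE_def extensional_def)

definition wordg :: "(nat \<times> nat \<Rightarrow> nat) \<Rightarrow> nat list" where
  "wordg g = map (word_of DD \<omega> g) [1..<nn+1]"

definition theta :: "nat list \<Rightarrow> (nat \<times> nat \<Rightarrow> nat)" where
  "theta xs = (\<lambda>c. if c \<in> DD then Suc (inv_into {..<nn} ((!) xs) (\<omega> c)) else undefined)"

lemma wordg_props:
  assumes g: "g \<in> linear_extensions DD"
  shows "distinct (wordg g)" "set (wordg g) = {1..nn}" "length (wordg g) = nn"
    "\<And>c. c \<in> DD \<Longrightarrow> wordg g ! (g c - 1) = \<omega> c" "\<And>c. c \<in> DD \<Longrightarrow> g c - 1 < nn"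
proof -
  have bg: "bij_betw g DD {1..nn}" using fin_LE_facts(1)[OF g] .
  have bi: "bij_betw (inv_into DD g) {1..nn} DD" using bij_betw_inv_into[OF bg] .
  have bs: "bij_betw (word_of DD \<omega> g) {1..nn} {1..nn}"
    unfolding word_of_def using bij_betw_trans[OF bi bij_om] by (simp add: comp_def)
  have st: "set [1..<nn+1] = {1..nn}" by auto
  show "distinct (wordg g)" unfolding wordg_def
    using bs by (simp add: distinct_map bij_betw_def atLeastLessThanSuc_atLeastAtMost del: upt_Suc)
  show "set (wordg g) = {1..nn}" unfolding wordg_def
    using bs by (simp add: bij_betw_def atLeastLessThanSuc_atLeastAtMost del: upt_Suc)
  show "length (wordg g) = nn" unfolding wordg_def by simp
  fix c assume c: "c \<in> DD"
  have gc: "g c \<in> {1..nn}" using bg c by (auto simp: bij_betw_def)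
  then show "g c - 1 < nn" by auto
  have "wordg g ! (g c - 1) = word_of DD \<omega> g (Suc (g c - 1))"
    unfolding wordg_def using map_shift(2)[of "g c - 1" nn "word_of DD \<omega> g"] gc by auto
  also have "\<dots> = \<omega> (inv_into DD g (g c))" using gc by (simp add: word_of_def)
  also have "\<dots> = \<omega> c" using bg c by (simp add: bij_betw_def inv_into_f_f)
  finally show "wordg g ! (g c - 1) = \<omega> c" .
qed

lemma wordg_in_E:
  assumes g: "g \<in> linear_extensions DD"
  shows "wordg g \<in> Eset nn dirr"
proof -
  let ?xs = "wordg g"
  note wp = wordg_props[OF g]
  have bg: "bij_betw g DD {1..nn}" using fin_LE_facts(1)[OF g] .
  have pat: "filter (\<lambda>x. x = m \<or> x = Suc m) ?xs = [Suc m, m] \<longleftrightarrow> dirr m" if m: "1 \<le> m" "m < nn" for m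
  proof -
    let ?A = "cell (Suc m)" and ?B = "cell m"
    have A: "?A \<in> DD" "\<omega> ?A = Suc m" using m cell_in om_cell by auto
    have B: "?B \<in> DD" "\<omega> ?B = m" using m cell_in om_cell by auto
    let ?i = "g ?B - 1" and ?j = "g ?A - 1"
    have xi: "?xs ! ?i = m" and xj: "?xs ! ?j = Suc m" using wp(4) A B by auto
    have il: "?i < length ?xs" "?j < length ?xs" using wp(3,5) A B by auto
    have "?A \<noteq> ?B" using A(2) B(2) by auto
    then have gne: "g ?A \<noteq> g ?B" using bg A(1) B(1) by (auto simp: bij_betw_def inj_on_def)
    have gr: "g ?A \<in> {1..nn}" "g ?B \<in> {1..nn}" using bg A(1) B(1) by (auto simp: bij_betw_def)
    have ij: "?i \<noteq> ?j" using gne gr by auto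
    have f: "filter (\<lambda>x. x = m \<or> x = Suc m) ?xs = (if ?i < ?j then [m, Suc m] else [Suc m, m])"
      using filter_two'[OF wp(1) il ij] xi xj by simp
    note adj = consec_adj[OF m]
    show ?thesis
    proof (cases "dirr m")
      case True
      then have "fst ?A = fst ?B + 1" "snd ?B = snd ?A" using adj unfolding dirr_def by auto
      then have "bs_le ?A ?B" by (simp add: bs_le_def)
      then have "g ?A \<le> g ?B" using fin_LE_facts(2)[OF g] A B by blast
      then have "\<not> ?i < ?j" using gne gr by auto
      then show ?thesis using f True by simp
    next
      case False
      then have "fst ?A = fst ?B" "snd ?B = snd ?A + 1" using adj unfolding dirr_def by auto
      then have "bs_le ?B ?A" by (simp add: bs_le_def)
      then have "g ?B \<le> g ?A" using fin_LE_facts(2)[OF g] A B by blast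
      then have "?i < ?j" using gne gr by auto
      then show ?thesis using f False by simp
    qed
  qed
  show ?thesis unfolding Eset_def using wp(1,2) pat by auto
qed


lemma theta_wordg:
  assumes g: "g \<in> linear_extensions DD"
  shows "theta (wordg g) = g"
proof
  fix c
  note wp = wordg_props[OF g]
  show "theta (wordg g) c = g c"
  proof (cases "c \<in> DD")
    case True
    have inj: "inj_on ((!) (wordg g)) {..<nn}" using wp(1,3) by (simp add: inj_on_nth)
    have "inv_into {..<nn} ((!) (wordg g)) (\<omega> c) = g c - 1"
      using inv_into_f_f[OF inj, of "g c - 1"] wp(4,5)[OF True] by simp
    moreover have "g c \<ge> 1" using fin_LE_facts(1)[OF g] True by (auto simp: bij_betw_def)
    ultimately show ?thesis using True by (simp add: theta_def)
  next
    case False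
    then show ?thesis using fin_LE_facts(3)[OF g] by (simp add: theta_def)
  qed
qed

lemma Eset_props:
  assumes xs: "xs \<in> Eset nn dirr"
  shows "distinct xs" "set xs = {1..nn}" "length xs = nn"
    "\<And>m. 1 \<le> m \<Longrightarrow> m < nn \<Longrightarrow> (filter (\<lambda>x. x = m \<or> x = Suc m) xs = [Suc m, m] \<longleftrightarrow> dirr m)"
  using assms by (auto simp: Eset_def dest: distinct_card)

lemma theta_props:
  assumes xs: "xs \<in> Eset nn dirr"
  shows "bij_betw (theta xs) DD {1..nn}"
    "\<And>c. c \<in> DD \<Longrightarrow> theta xs c = Suc (inv_into {..<nn} ((!) xs) (\<omega> c))"
proof -
  note ep = Eset_props[OF xs]
  have bn: "bij_betw ((!) xs) {..<nn} (set xs)" using bij_betw_nth[of xs] ep by simp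
  have bi: "bij_betw (inv_into {..<nn} ((!) xs)) {1..nn} {..<nn}"
    using bij_betw_inv_into[OF bn] ep(2) by simp
  have "bij_betw (Suc \<circ> (inv_into {..<nn} ((!) xs) \<circ> \<omega>)) DD {1..nn}"
    by (rule bij_betw_trans[OF bij_betw_trans[OF bij_om bi] bij_Suc])
  moreover have "bij_betw (theta xs) DD {1..nn} = bij_betw (Suc \<circ> (inv_into {..<nn} ((!) xs) \<circ> \<omega>)) DD {1..nn}"
    by (rule bij_betw_cong) (simp add: theta_def)
  ultimately show "bij_betw (theta xs) DD {1..nn}" by simp
  show "\<And>c. c \<in> DD \<Longrightarrow> theta xs c = Suc (inv_into {..<nn} ((!) xs) (\<omega> c))"
    by (simp add: theta_def)
qed

lemma theta_in_LE:
  assumes xs: "xs \<in> Eset nn dirr"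
  shows "theta xs \<in> linear_extensions DD"
proof -
  note ep = Eset_props[OF xs]
  note tp = theta_props[OF xs]
  define pos where "pos v = inv_into {..<nn} ((!) xs) v" for v
  have inj: "inj_on ((!) xs) {..<nn}" using ep by (simp add: inj_on_nth)
  have pos1: "pos v < nn" "xs ! pos v = v" if "v \<in> {1..nn}" for v
  proof -
    have bn: "bij_betw ((!) xs) {..<nn} (set xs)" using bij_betw_nth[of xs] ep by simp
    have "v \<in> (!) xs ` {..<nn}" using that ep(2) bn by (simp add: bij_betw_def)
    then show "pos v < nn" "xs ! pos v = v" unfolding pos_def
      using inv_into_into[of v "(!) xs" "{..<nn}"] f_inv_into_f[of v "(!) xs" "{..<nn}"] by auto
  qed
  have stepU: "pos (Suc m) < pos m" if "1 \<le> m" "m < nn" "dirr m" for m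
  proof -
    have r: "m \<in> {1..nn}" "Suc m \<in> {1..nn}" using that by auto
    have ne: "pos m \<noteq> pos (Suc m)" using pos1[OF r(1)] pos1[OF r(2)] by (metis n_not_Suc_n)
    have "filter (\<lambda>x. x = m \<or> x = Suc m) xs = (if pos m < pos (Suc m) then [m, Suc m] else [Suc m, m])"
      using filter_two'[OF ep(1), of "pos m" "pos (Suc m)"] pos1[OF r(1)] pos1[OF r(2)] ne ep(3) by simp
    moreover have "filter (\<lambda>x. x = m \<or> x = Suc m) xs = [Suc m, m]" using ep(4) that by simp
    ultimately show ?thesis using ne by (auto split: if_splits)
  qed
  have stepR: "pos m < pos (Suc m)" if "1 \<le> m" "m < nn" "\<not> dirr m" for m
  proof -
    have r: "m \<in> {1..nn}" "Suc m \<in> {1..nn}" using that by auto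
    have ne: "pos m \<noteq> pos (Suc m)" using pos1[OF r(1)] pos1[OF r(2)] by (metis n_not_Suc_n)
    have "filter (\<lambda>x. x = m \<or> x = Suc m) xs = (if pos m < pos (Suc m) then [m, Suc m] else [Suc m, m])"
      using filter_two'[OF ep(1), of "pos m" "pos (Suc m)"] pos1[OF r(1)] pos1[OF r(2)] ne ep(3) by simp
    moreover have "filter (\<lambda>x. x = m \<or> x = Suc m) xs \<noteq> [Suc m, m]" using ep(4) that by simp
    ultimately show ?thesis by (auto split: if_splits)
  qed
  have ord: "theta xs a \<le> theta xs b" if ab: "a \<in> DD" "b \<in> DD" "bs_le a b" for a b
  proof -
    let ?p = "\<omega> a" and ?r = "\<omega> b"
    have pr: "?p \<in> {1..nn}" "?r \<in> {1..nn}" using om_range ab by auto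
    have ca: "cell ?p = a" "cell ?r = b" using cell_om ab by auto
    have "pos ?p \<le> pos ?r"
    proof (cases "?p < ?r")
      case True
      have "fst (cell ?p) + card {m \<in> {?p..<?r}. dirr m} = fst (cell ?r)"
        using mono_cells[of ?p ?r] pr True by auto
      then have e: "fst a + card {m \<in> {?p..<?r}. dirr m} = fst b" using ca by simp
      have "card {m \<in> {?p..<?r}. dirr m} = 0" using e ab(3) unfolding bs_le_def by linarith
      moreover have "finite {m \<in> {?p..<?r}. dirr m}" by simp
      ultimately have "{m \<in> {?p..<?r}. dirr m} = {}" by simp
      then have "\<forall>m \<in> {?p..<?r}. \<not> dirr m" by blast
      then have "pos ?p < pos ?r"
        using chain_lt[of ?p ?r pos] stepR pr True by simp
      then show ?thesis by simp
    next
      case False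
      show ?thesis
      proof (cases "?p = ?r")
        case True
        then show ?thesis by simp
      next
        case False2: False
        then have lt: "?r < ?p" using False by simp
        have "snd (cell ?r) = snd (cell ?p) + card {m \<in> {?r..<?p}. \<not> dirr m}"
          using mono_cells[of ?r ?p] pr lt by auto
        then have e: "snd b = snd a + card {m \<in> {?r..<?p}. \<not> dirr m}" using ca by simp
        have "card {m \<in> {?r..<?p}. \<not> dirr m} = 0" using e ab(3) unfolding bs_le_def by linarith
        moreover have "finite {m \<in> {?r..<?p}. \<not> dirr m}" by simp
        ultimately have "{m \<in> {?r..<?p}. \<not> dirr m} = {}" by simp
        then have "\<forall>m \<in> {?r..<?p}. dirr m" by blast
        then have "pos ?p < pos ?r"
          using chain_gt[of ?r ?p pos] stepU pr lt by simp
        then show ?thesis by simp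
      qed
    qed
    then show ?thesis using tp(2) ab by (simp add: pos_def)
  qed
  have pie: "theta xs \<in> DD \<rightarrow>\<^sub>E {1..nn}"
    using tp(1) by (auto simp: bij_betw_def theta_def)
  have "\<forall>a\<in>DD. \<forall>b\<in>DD. bs_le a b \<longrightarrow> theta xs a \<le> theta xs b" using ord by blast
  then show ?thesis unfolding linear_extensions_def using pie tp(1) by simp
qed

lemma wordg_theta:
  assumes xs: "xs \<in> Eset nn dirr"
  shows "wordg (theta xs) = xs"
proof -
  note ep = Eset_props[OF xs]
  note tp = theta_props[OF xs]
  have inj: "inj_on ((!) xs) {..<nn}" using ep by (simp add: inj_on_nth)
  show ?thesis
  proof (rule nth_equalityI)
    show "length (wordg (theta xs)) = length xs" using ep by (simp add: wordg_def)
    fix k assume "k < length (wordg (theta xs))"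
    then have k: "k < nn" unfolding wordg_def using map_shift(1)[of _ nn] by (simp del: upt_Suc)
    have v: "xs ! k \<in> {1..nn}" using ep k by (metis nth_mem)
    let ?c = "cell (xs ! k)"
    have c: "?c \<in> DD" "\<omega> ?c = xs ! k" using cell_in[OF v] om_cell[OF v] by auto
    have "theta xs ?c = Suc k" using tp(2)[OF c(1)] c(2) inv_into_f_f[OF inj, of k] k by simp
    then have "inv_into DD (theta xs) (Suc k) = ?c"
      using bij_betw_inv_into_left[OF tp(1) c(1)] by simp
    then show "wordg (theta xs) ! k = xs ! k"
      using map_shift(2)[of k nn "word_of DD \<omega> (theta xs)"] k c(2)
      by (simp add: wordg_def word_of_def)
  qed
qed

lemma sum_LE_Eset:
  "(\<Sum>g\<in>linear_extensions DD. F (wordg g)) = (\<Sum>xs\<in>Eset nn dirr. F xs)"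
  by (rule sum.reindex_bij_witness[of _ theta wordg])
     (simp_all add: theta_wordg wordg_in_E wordg_theta theta_in_LE)


lemma main_ctx: "eq_stat inv_stat DD \<omega> = eq_stat maj DD \<omega>"
proof -
  have 1: "eq_stat inv_stat DD \<omega> = (\<Sum>xs\<in>Eset nn dirr. monom 1 (invr xs))"
    unfolding eq_stat_def using sum_LE_Eset[of "\<lambda>xs. monom 1 (invr xs)"]
    by (simp add: inv_stat_bridge wordg_def)
  have 2: "eq_stat maj DD \<omega> = (\<Sum>xs\<in>Eset nn dirr. monom 1 (majl xs))"
    unfolding eq_stat_def using sum_LE_Eset[of "\<lambda>xs. monom 1 (majl xs)"]
    by (simp add: maj_bridge wordg_def)
  show ?thesis unfolding 1 2 by (rule Eset_equidist)
qed

end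

theorem corollary7p2:
  fixes lam mu :: "nat list" and \<omega> :: "nat \<times> nat \<Rightarrow> nat"
  assumes "border_strip lam mu"
    and "reversed_schur_labeling (skew_diagram lam mu) \<omega>"
  shows "eq_stat inv_stat (skew_diagram lam mu) \<omega> = eq_stat maj (skew_diagram lam mu) \<omega>"
  using main_ctx[OF assms] .

end
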